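(* In the construction below, for every $k\in\{0,\dots,K-1\}$ and every $u\in U_k$, $$\sum_{w:(u,w)\in A_k}|B_X(w,\tau^{-(k+1)}/3)|\le|B_X(u,6\tau^{-k})|.$$
   Context: Construction. Let $(X,d)$ be a metric space with $n=|X|\ge2$ and $\mathrm{diam}(X)=1$. For $S\subseteq X$, $r\ge0$: $B_X(S,r):=\{x\in X:\exists s\in S,\ d(x,s)\le r\}$ and $B_X(x,r):=B_X(\{x\},r)$. Let $\varepsilon_0:=\min\{d(x,y):x\ne y\}$, $\tau:=12$, $K:=1+\lceil\log_\tau(1/\varepsilon_0)\rceil$. For $\eta>0$ the greedy $\eta$-net is built as: $N_0=\emptyset$; for $j\ge1$, $S_j:=X\setminus B_X(N_{j-1},\eta)$; if $S_j=\emptyset$ output $N_{j-1}$; else pick $x_j\in S_j$ maximizing $|B_X(x,\eta/3)|$ and set $N_j=N_{j-1}\cup\{x_j\}$. For $k=0,\dots,K$ let $U_k$ be the greedy $\tau^{-k}$-net. For $k<K$, $A_k$ is the set of pairs $(u,u')\in U_k\times U_{k+1}$ with (i) $d(u,u')\le4\tau^{-k}$ and (ii) $|B_X(u,\tau^{-k}/3)|\ge\max\{|B_X(w,\tau^{-k}/3)|:w\in B_X(u',6\tau^{-(k+1)})\}$. *)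

theory Defs
  imports "HOL-Analysis.Analysis"
begin

definition setball :: "'a::metric_space set \<Rightarrow> 'a set \<Rightarrow> real \<Rightarrow> 'a set" where
  "setball X S r = {x \<in> X. \<exists>s\<in>S. dist x s \<le> r}"

definition ptball :: "'a::metric_space set \<Rightarrow> 'a \<Rightarrow> real \<Rightarrow> 'a set" where
  "ptball X x r = setball X {x} r"

definition tau :: real where "tau = 12"

definition eps0 :: "'a::metric_space set \<Rightarrow> real" where
  "eps0 X = Min {dist x y | x y. x \<in> X \<and> y \<in> X \<and> x \<noteq> y}"

definition Klev :: "'a::metric_space set \<Rightarrow> nat" where
  "Klev X = 1 + nat \<lceil>log tau (1 / eps0 X)\<rceil>"

text \<open>Partial runs of the greedy eta-net construction (arbitrary tie-breaking):
  N is a possible value of some N_j.\<close>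
inductive greedy_run :: "'a::metric_space set \<Rightarrow> real \<Rightarrow> 'a set \<Rightarrow> bool"
  for X :: "'a set" and eta :: real where
  start: "greedy_run X eta {}"
| step: "greedy_run X eta N \<Longrightarrow> x \<in> X - setball X N eta \<Longrightarrow>
    (\<forall>y \<in> X - setball X N eta. card (ptball X y (eta/3)) \<le> card (ptball X x (eta/3))) \<Longrightarrow>
    greedy_run X eta (insert x N)"

text \<open>U is a possible output of the greedy eta-net construction: a run that stops
  because S_j is empty.\<close>
definition greedy_net :: "'a::metric_space set \<Rightarrow> real \<Rightarrow> 'a set \<Rightarrow> bool" where
  "greedy_net X eta U \<longleftrightarrow> greedy_run X eta U \<and> X - setball X U eta = {}"

definition arcs :: "'a::metric_space set \<Rightarrow> (nat \<Rightarrow> 'a set) \<Rightarrow> nat \<Rightarrow> ('a \<times> 'a) set" where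
  "arcs X U k = {(u, u'). u \<in> U k \<and> u' \<in> U (Suc k) \<and>
      dist u u' \<le> 4 * tau powi (- int k) \<and>
      card (ptball X u (tau powi (- int k) / 3)) \<ge>
        Max ((\<lambda>w. card (ptball X w (tau powi (- int k) / 3))) `
               ptball X u' (6 * tau powi (- int (Suc k))))}"

end

theory Submission
  imports Defs
begin

lemma greedy_run_sep:
  assumes "greedy_run X eta N"
  shows "N \<subseteq> X \<and> (\<forall>a\<in>N. \<forall>b\<in>N. a \<noteq> b \<longrightarrow> dist a b > eta)"
  using assms
proof (induction rule: greedy_run.induct)
  case start
  then show ?case by simp
next
  case (step N x)
  have "\<forall>s\<in>N. dist x s > eta"
    using step.hyps(2) by (auto simp: setball_def not_le)
  then show ?case using step.IH step.hyps(2) by (auto simp: dist_commute)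
qed

theorem claim3p4:
  fixes X :: "'a::metric_space set" and U :: "nat \<Rightarrow> 'a set"
  assumes "finite X" and "card X \<ge> 2" and "diameter X = 1"
    and "\<forall>k \<le> Klev X. greedy_net X (tau powi (- int k)) (U k)"
    and "k < Klev X" and "u \<in> U k"
  shows "(\<Sum>w \<in> {w. (u, w) \<in> arcs X U k}. card (ptball X w (tau powi (- int (Suc k)) / 3)))
           \<le> card (ptball X u (6 * tau powi (- int k)))"
proof -
  define R where "R = tau powi (- int k)"
  define r where "r = tau powi (- int (Suc k))"
  have Rpos: "R > 0" unfolding R_def tau_def by simp
  have rR: "r = R / 12"
    unfolding r_def R_def tau_def by (simp add: power_int_diff power_int_minus divide_simps)
  have rpos: "r > 0" using Rpos rR by simp
  have "greedy_net X r (U (Suc k))" proof -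
    have "Suc k \<le> Klev X" using assms(5) by simp
    from assms(4)[rule_format, OF this] show ?thesis unfolding r_def .
  qed
  hence sep: "U (Suc k) \<subseteq> X \<and> (\<forall>a\<in>U (Suc k). \<forall>b\<in>U (Suc k). a \<noteq> b \<longrightarrow> dist a b > r)"
    using greedy_run_sep[of X r "U (Suc k)"] by (simp add: greedy_net_def)
  define W where "W = {w. (u, w) \<in> arcs X U k}"
  have WU: "W \<subseteq> U (Suc k)" unfolding W_def arcs_def by auto
  have Wd: "\<And>w. w \<in> W \<Longrightarrow> dist u w \<le> 4 * R" unfolding W_def arcs_def R_def by auto
  have finW: "finite W" proof -
    have "U (Suc k) \<subseteq> X" using sep by simp
    with WU have "W \<subseteq> X" by (rule order_trans)
    thus ?thesis using assms(1) by (rule finite_subset)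
  qed
  have disj: "\<forall>w1\<in>W. \<forall>w2\<in>W. w1 \<noteq> w2 \<longrightarrow> ptball X w1 (r/3) \<inter> ptball X w2 (r/3) = {}"
  proof (intro ballI impI)
    fix w1 w2 assume h: "w1 \<in> W" "w2 \<in> W" "w1 \<noteq> w2"
    have "dist w1 w2 > r" proof -
      have "w1 \<in> U (Suc k)" "w2 \<in> U (Suc k)" using WU h by auto
      thus ?thesis using sep h(3) by simp
    qed
    show "ptball X w1 (r/3) \<inter> ptball X w2 (r/3) = {}"
    proof (rule ccontr)
      assume "ptball X w1 (r/3) \<inter> ptball X w2 (r/3) \<noteq> {}"
      then obtain z where "dist z w1 \<le> r/3" "dist z w2 \<le> r/3"
        by (auto simp: ptball_def setball_def)
      hence "dist w1 w2 \<le> 2*r/3" using dist_triangle3[of w1 w2 z] by (simp add: dist_commute)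
      thus False using \<open>dist w1 w2 > r\<close> rpos by simp
    qed
  qed
  have sub: "(\<Union>w\<in>W. ptball X w (r/3)) \<subseteq> ptball X u (6 * R)"
  proof
    fix z assume "z \<in> (\<Union>w\<in>W. ptball X w (r/3))"
    then obtain w where w: "w \<in> W" "z \<in> X" "dist z w \<le> r/3"
      by (auto simp: ptball_def setball_def)
    have "dist z u \<le> dist z w + dist w u" by (rule dist_triangle)
    also have "\<dots> \<le> r/3 + 4*R" using w Wd[of w] by (simp add: dist_commute)
    also have "\<dots> \<le> 6*R" using rR Rpos by simp
    finally show "z \<in> ptball X u (6 * R)" using w by (auto simp: ptball_def setball_def)
  qed
  have fb: "\<forall>w\<in>W. finite (ptball X w (r/3))"
    using assms(1) by (auto simp: ptball_def setball_def)
  have "(\<Sum>w\<in>W. card (ptball X w (r/3))) = card (\<Union>w\<in>W. ptball X w (r/3))"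
    using card_UN_disjoint[OF finW fb disj] by simp
  also have "\<dots> \<le> card (ptball X u (6 * R))"
    by (rule card_mono[OF _ sub]) (use assms(1) in \<open>auto simp: ptball_def setball_def\<close>)
  finally show ?thesis unfolding W_def r_def R_def .
qed

end
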